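(* Let $V(r)=r\coth r-\log|2\sinh r|$ for $r>0$ and $V_{\mathrm{eff}}(x):=\sum_{k=1}^\infty V(kx)$ for $x>0$. For every $C>0$ there exists $\alpha_0>0$ such that for every $x>0$: if $\sup_{\alpha>\alpha_0}\big[C\,V_{\mathrm{eff}}(\alpha/C)-V(\alpha x)\big]>0$, then $x\ge\frac1{4C}$. *)

theory Defs
  imports "HOL-Analysis.Analysis"
begin

definition coth :: "real \<Rightarrow> real" where
  "coth r = cosh r / sinh r"

definition V :: "real \<Rightarrow> real" where
  "V r = r * coth r - ln \<bar>2 * sinh r\<bar>"

definition V_eff :: "real \<Rightarrow> real" where
  "V_eff x = (\<Sum>k. V (real (Suc k) * x))"

end

theory Submission
  imports Defs
begin

lemma V_eq:
  fixes r :: real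
  assumes r: "r > 0"
  defines "t \<equiv> exp (-2*r)"
  shows "V r = 2*r*t/(1-t) - ln (1-t)" and "0 < t" and "t < 1"
proof -
  have e2: "exp (-2*r) = exp (-r) * exp (-r)" by (subst exp_add [symmetric]) simp
  show t0: "0 < t" unfolding t_def by simp
  show t1: "t < 1" unfolding t_def using r by simp
  have s: "2 * sinh r = exp r * (1 - t)"
    unfolding t_def e2 by (simp add: sinh_def exp_minus field_simps)
  have c: "2 * cosh r = exp r * (1 + t)"
    unfolding t_def e2 by (simp add: cosh_def exp_minus field_simps)
  have sp: "2 * sinh r > 0" using s t1 by simp
  have coth: "coth r = (1+t)/(1-t)"
  proof -
    have "coth r = (2 * cosh r)/(2 * sinh r)" by (simp add: coth_def)
    also have "\<dots> = (exp r * (1 + t)) / (exp r * (1 - t))" by (simp only: s c)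
    also have "\<dots> = (1+t)/(1-t)" by simp
    finally show ?thesis .
  qed
  have l: "ln \<bar>2 * sinh r\<bar> = r + ln (1-t)"
    using sp s t1 by (simp add: ln_mult)
  have "V r = r*(1+t)/(1-t) - r - ln (1-t)"
    unfolding V_def coth l by simp
  also have "\<dots> = 2*r*t/(1-t) - ln (1-t)" using t1 by (simp add: field_simps)
  finally show "V r = 2*r*t/(1-t) - ln (1-t)" .
qed

lemma V_lower:
  fixes r :: real
  assumes r: "r > 0"
  shows "V r \<ge> exp (-2*r)"
proof -
  define t where "t = exp (-2*r)"
  have t: "V r = 2*r*t/(1-t) - ln (1-t)" "0 < t" "t < 1"
    using V_eq[OF r] unfolding t_def by auto
  have "ln (1-t) \<le> -t" using ln_le_minus_one[of "1-t"] t by simp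
  moreover have "2*r*t/(1-t) \<ge> 0" using t r by simp
  ultimately show ?thesis using t unfolding t_def by linarith
qed

lemma V_upper:
  fixes r :: real
  assumes r: "r \<ge> 30"
  shows "V r \<le> exp (-3/2*r)"
proof -
  define t where "t = exp (-2*r)"
  have t: "V r = 2*r*t/(1-t) - ln (1-t)" "0 < t" "t < 1"
    using V_eq[of r] r unfolding t_def by auto
  have "ln (1/(1-t)) \<le> 1/(1-t) - 1" using ln_le_minus_one[of "1/(1-t)"] t by simp
  hence "- ln (1-t) \<le> t/(1-t)" using t by (simp add: ln_div field_simps)
  hence A: "V r \<le> (2*r+1)*t/(1-t)" using t by (simp add: field_simps)
  have "exp (2*r) \<ge> 1 + 2*r" by (rule exp_ge_add_one_self)
  hence "exp (2*r) \<ge> 2" using r by linarith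
  hence "t \<le> 1/2" unfolding t_def by (simp add: exp_minus field_simps)
  hence "(2*r+1)*t/(1-t) \<le> (2*r+1)*t/(1/2)" using t r by (intro divide_left_mono) auto
  also have "\<dots> = (2*r+1)*t*2" by simp
  also have "\<dots> = (4*r+2)*t" by simp
  also have "\<dots> \<le> exp (r/2) * t"
  proof -
    have "1 + r/2 + (r/2)^2/2 \<le> exp (r/2)" using exp_lower_Taylor_quadratic[of "r/2"] r by simp
    moreover have "4*r+2 \<le> 1 + r/2 + (r/2)^2/2"
    proof -
      have "30*r \<le> r*r" using r by (intro mult_right_mono) auto
      hence "8 + r * 28 \<le> r * r" using r by linarith
      thus ?thesis by (simp add: power2_eq_square field_simps)
    qed
    ultimately show ?thesis using t by (intro mult_right_mono) auto
  qed
  also have "\<dots> = exp (-3/2*r)" unfolding t_def by (simp add: exp_add[symmetric])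
  finally show ?thesis using A by linarith
qed

lemma Veff_upper:
  fixes y :: real
  assumes y: "y \<ge> 30"
  shows "V_eff y \<le> 2 * exp (-3/2*y)"
proof -
  define q where "q = exp (-3/2*y)"
  have q0: "0 < q" unfolding q_def by simp
  have "exp (3/2*y) \<ge> 1 + 3/2*y" by (rule exp_ge_add_one_self)
  hence "exp (3/2*y) \<ge> 2" using y by linarith
  hence qh: "q \<le> 1/2" unfolding q_def by (simp add: exp_minus field_simps)
  have bnd: "V (real (Suc k) * y) \<le> q * q^k" for k
  proof -
    have "real (Suc k) \<ge> 1" by simp
    hence "real (Suc k) * y \<ge> 1 * 30" using y by (intro mult_mono) auto
    hence "real (Suc k) * y \<ge> 30" by simp
    hence "V (real (Suc k) * y) \<le> exp (-3/2*(real (Suc k) * y))" by (rule V_upper)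
    also have "\<dots> = exp (real (Suc k) * (-3/2*y))" by (simp add: algebra_simps)
    also have "\<dots> = q * q^k" unfolding exp_of_nat_mult q_def by simp
    finally show ?thesis .
  qed
  have pos: "0 \<le> V (real (Suc k) * y)" for k
  proof -
    have "real (Suc k) * y > 0" using y by simp
    from V_lower[OF this] show ?thesis by (smt (verit) exp_gt_zero)
  qed
  have sg: "summable (\<lambda>k. q * q^k)" using q0 qh by (intro summable_mult summable_geometric) simp
  have sv: "summable (\<lambda>k. V (real (Suc k) * y))"
    by (rule summable_comparison_test[OF _ sg]) (use bnd pos in auto)
  have "V_eff y \<le> (\<Sum>k. q * q^k)" unfolding V_eff_def
    by (rule suminf_le[OF bnd sv sg])
  also have "\<dots> = q / (1-q)" using q0 qh by (simp add: suminf_mult suminf_geometric)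
  also have "\<dots> \<le> 2*q" using q0 qh by (simp add: field_simps)
  finally show ?thesis unfolding q_def .
qed

theorem mainTheorem8:
  fixes C :: real
  assumes "C > 0"
  shows "\<exists>\<alpha>0>0. \<forall>x>0.
    (SUP \<alpha>\<in>{\<alpha>0<..}. ereal (C * V_eff (\<alpha> / C) - V (\<alpha> * x))) > 0
    \<longrightarrow> x \<ge> 1 / (4 * C)"
proof (intro exI[of _ "C*(30+2*C)"] conjI allI impI)
  show "C*(30+2*C) > 0" using assms by simp
  fix x :: real
  assume x: "x > 0"
  assume S: "(SUP \<alpha>\<in>{C*(30+2*C)<..}. ereal (C * V_eff (\<alpha> / C) - V (\<alpha> * x))) > 0"
  show "x \<ge> 1 / (4 * C)"
  proof (rule ccontr)
    assume "\<not> x \<ge> 1 / (4 * C)"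
    hence xs: "x < 1/(4*C)" by simp
    have "(SUP \<alpha>\<in>{C*(30+2*C)<..}. ereal (C * V_eff (\<alpha> / C) - V (\<alpha> * x))) \<le> 0"
    proof (rule SUP_least)
      fix \<alpha> assume "\<alpha> \<in> {C*(30+2*C)<..}"
      hence a: "\<alpha> > C*(30+2*C)" by simp
      define y where "y = \<alpha>/C"
      have y: "y > 30 + 2*C" using a assms unfolding y_def by (simp add: field_simps)
      have ay: "\<alpha> = C*y" using assms unfolding y_def by simp
      have "exp y \<ge> 1 + y" by (rule exp_ge_add_one_self)
      hence ey: "2*C \<le> exp y" using y by linarith
      have "C * V_eff y \<le> C * (2 * exp (-3/2*y))"
        using Veff_upper[of y] y assms by simp
      also have "\<dots> = (2*C) * exp (-y) * exp (-y/2)" by (simp add: exp_add[symmetric])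
      also have "\<dots> \<le> exp y * exp (-y) * exp (-y/2)"
        using ey by (intro mult_right_mono) auto
      also have "\<dots> = exp (-y/2)" by (simp add: exp_minus)
      also have "\<dots> < exp (-2*(\<alpha>*x))"
      proof -
        have "4*C*x < 1" using xs assms by (simp add: field_simps)
        hence "y * (4*C*x) < y * 1" using y assms by (intro mult_strict_left_mono) auto
        hence "2*(\<alpha>*x) < y/2" unfolding ay by (simp add: algebra_simps)
        thus ?thesis by simp
      qed
      also have "\<dots> \<le> V (\<alpha>*x)" using a x assms
        by (intro V_lower) (smt (verit) mult_pos_pos zero_less_mult_iff)
      finally show "ereal (C * V_eff (\<alpha> / C) - V (\<alpha> * x)) \<le> 0"
        unfolding y_def by simp
    qed
    with S show False by simp
  qed
qed

end
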